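(* Let $(G,M,\Delta)$ be a Garside structure and let $(H,N,\delta)$ be a parabolic substructure of it, with $H\neq\{1\}$. Let $T$ be the set of $(H,N)$-reduced elements of $G$. Then $T$ is a right transversal of $H$ in $G$, i.e. for every right coset $C=H\alpha$ ($\alpha\in G$) the set $C\cap T$ consists of exactly one element.
   Context: Let $G$ be a group and $M$ a submonoid with $M\cap M^{-1}=\{1\}$. Define partial orders on $G$ by $\alpha\le_L\beta$ iff $\alpha^{-1}\beta\in M$, and $\alpha\le_R\beta$ iff $\beta\alpha^{-1}\in M$. For $a\in M$ let $\mathrm{Div}_L(a)=\{b\in M: b\le_L a\}$, $\mathrm{Div}_R(a)=\{b\in M: b\le_R a\}$; $a$ is balanced if these coincide, and then $\mathrm{Div}(a)$ denotes this set. $M$ is Noetherian if each $a\in M$ admits an integer $n$ such that $a$ is not a product of more than $n$ non-trivial factors. A Garside structure $(G,M,\Delta)$ consists of such $G,M$ and a balanced $\Delta\in M$ such that: $M$ is Noetherian; $\mathrm{Div}(\Delta)$ is finite and generates $M$ as a monoid and $G$ as a group; $(G,\le_L)$ is a lattice (with meet $\wedge_L$, join $\vee_L$). A parabolic substructure is a triple $(H,N,\delta)$ where $\delta\in M$ is balanced, $H$ (resp. $N$) is the subgroup of $G$ (resp. submonoid of $M$) generated by $\mathrm{Div}(\delta)$, and $\mathrm{Div}(\delta)=\mathrm{Div}(\Delta)\cap N$. Put $\omega=\delta^{-1}\Delta\in M$. An element $a\in M$ is unmovable if $\Delta\not\le_L a$. Every $\alpha\in G$ has a unique right $\Delta$-form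 $\alpha=a\Delta^p$ with $a\in M$ unmovable and $p\in\mathbb Z$. An element $a\in M$ is $N$-reduced if $a\wedge_L\delta=1$ (equivalently, the only $b\in N$ with $b\le_L a$ is $b=1$). An element $\alpha\in G$ with right $\Delta$-form $a\Delta^p$ is $(H,N)$-reduced if $a$ is $N$-reduced and either $p=0$, or $p<0$ and $\omega\not\le_L a$. *)

theory Defs
  imports "HOL-Algebra.Algebra"
begin

definition leL :: "('a, 'b) monoid_scheme \<Rightarrow> 'a set \<Rightarrow> 'a \<Rightarrow> 'a \<Rightarrow> bool" where
  "leL G M x y \<longleftrightarrow> inv\<^bsub>G\<^esub> x \<otimes>\<^bsub>G\<^esub> y \<in> M"

definition leR :: "('a, 'b) monoid_scheme \<Rightarrow> 'a set \<Rightarrow> 'a \<Rightarrow> 'a \<Rightarrow> bool" where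
  "leR G M x y \<longleftrightarrow> y \<otimes>\<^bsub>G\<^esub> inv\<^bsub>G\<^esub> x \<in> M"

definition DivL :: "('a, 'b) monoid_scheme \<Rightarrow> 'a set \<Rightarrow> 'a \<Rightarrow> 'a set" where
  "DivL G M a = {b \<in> M. leL G M b a}"

definition DivR :: "('a, 'b) monoid_scheme \<Rightarrow> 'a set \<Rightarrow> 'a \<Rightarrow> 'a set" where
  "DivR G M a = {b \<in> M. leR G M b a}"

definition balanced :: "('a, 'b) monoid_scheme \<Rightarrow> 'a set \<Rightarrow> 'a \<Rightarrow> bool" where
  "balanced G M a \<longleftrightarrow> a \<in> M \<and> DivL G M a = DivR G M a"

text \<open>Div(a), used only for balanced a.\<close>
definition Div :: "('a, 'b) monoid_scheme \<Rightarrow> 'a set \<Rightarrow> 'a \<Rightarrow> 'a set" where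
  "Div G M a = DivL G M a"

definition lprod :: "('a, 'b) monoid_scheme \<Rightarrow> 'a list \<Rightarrow> 'a" where
  "lprod G xs = foldr (\<lambda>x y. x \<otimes>\<^bsub>G\<^esub> y) xs \<one>\<^bsub>G\<^esub>"

definition monoid_gen :: "('a, 'b) monoid_scheme \<Rightarrow> 'a set \<Rightarrow> 'a set" where
  "monoid_gen G S = {lprod G xs | xs. set xs \<subseteq> S}"

definition submonoid_of :: "('a, 'b) monoid_scheme \<Rightarrow> 'a set \<Rightarrow> bool" where
  "submonoid_of G M \<longleftrightarrow> M \<subseteq> carrier G \<and> \<one>\<^bsub>G\<^esub> \<in> M \<and>
     (\<forall>x\<in>M. \<forall>y\<in>M. x \<otimes>\<^bsub>G\<^esub> y \<in> M)"

definition noetherian :: "('a, 'b) monoid_scheme \<Rightarrow> 'a set \<Rightarrow> bool" where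
  "noetherian G M \<longleftrightarrow> (\<forall>a\<in>M. \<exists>n::nat. \<forall>xs. set xs \<subseteq> M - {\<one>\<^bsub>G\<^esub>} \<and> lprod G xs = a
        \<longrightarrow> length xs \<le> n)"

definition is_glbL :: "('a, 'b) monoid_scheme \<Rightarrow> 'a set \<Rightarrow> 'a \<Rightarrow> 'a \<Rightarrow> 'a \<Rightarrow> bool" where
  "is_glbL G M c x y \<longleftrightarrow> c \<in> carrier G \<and> leL G M c x \<and> leL G M c y \<and>
     (\<forall>d\<in>carrier G. leL G M d x \<and> leL G M d y \<longrightarrow> leL G M d c)"

definition is_lubL :: "('a, 'b) monoid_scheme \<Rightarrow> 'a set \<Rightarrow> 'a \<Rightarrow> 'a \<Rightarrow> 'a \<Rightarrow> bool" where
  "is_lubL G M c x y \<longleftrightarrow> c \<in> carrier G \<and> leL G M x c \<and> leL G M y c \<and>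
     (\<forall>d\<in>carrier G. leL G M x d \<and> leL G M y d \<longrightarrow> leL G M c d)"

definition meetL :: "('a, 'b) monoid_scheme \<Rightarrow> 'a set \<Rightarrow> 'a \<Rightarrow> 'a \<Rightarrow> 'a" where
  "meetL G M x y = (THE c. is_glbL G M c x y)"

definition lattice_L :: "('a, 'b) monoid_scheme \<Rightarrow> 'a set \<Rightarrow> bool" where
  "lattice_L G M \<longleftrightarrow> (\<forall>x\<in>carrier G. \<forall>y\<in>carrier G.
      (\<exists>c. is_glbL G M c x y) \<and> (\<exists>c. is_lubL G M c x y))"

definition garside_structure :: "('a, 'b) monoid_scheme \<Rightarrow> 'a set \<Rightarrow> 'a \<Rightarrow> bool" where
  "garside_structure G M \<Delta> \<longleftrightarrow>
     group G \<and> submonoid_of G M \<and> M \<inter> (\<lambda>x. inv\<^bsub>G\<^esub> x) ` M = {\<one>\<^bsub>G\<^esub>} \<and>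
     balanced G M \<Delta> \<and> noetherian G M \<and>
     finite (Div G M \<Delta>) \<and> monoid_gen G (Div G M \<Delta>) = M \<and>
     generate G (Div G M \<Delta>) = carrier G \<and>
     lattice_L G M"

definition parabolic_substructure ::
  "('a, 'b) monoid_scheme \<Rightarrow> 'a set \<Rightarrow> 'a \<Rightarrow> 'a set \<Rightarrow> 'a set \<Rightarrow> 'a \<Rightarrow> bool" where
  "parabolic_substructure G M \<Delta> H N \<delta> \<longleftrightarrow>
     balanced G M \<delta> \<and> H = generate G (Div G M \<delta>) \<and> N = monoid_gen G (Div G M \<delta>) \<and>
     Div G M \<delta> = Div G M \<Delta> \<inter> N"

definition unmovable :: "('a, 'b) monoid_scheme \<Rightarrow> 'a set \<Rightarrow> 'a \<Rightarrow> 'a \<Rightarrow> bool" where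
  "unmovable G M \<Delta> a \<longleftrightarrow> a \<in> M \<and> \<not> leL G M \<Delta> a"

definition N_reduced :: "('a, 'b) monoid_scheme \<Rightarrow> 'a set \<Rightarrow> 'a \<Rightarrow> 'a \<Rightarrow> bool" where
  "N_reduced G M \<delta> a \<longleftrightarrow> a \<in> M \<and> meetL G M a \<delta> = \<one>\<^bsub>G\<^esub>"

text \<open>alpha is (H,N)-reduced: its right Delta-form a Delta^p (unique by the context)
  satisfies the conditions.\<close>
definition HN_reduced :: "('a, 'b) monoid_scheme \<Rightarrow> 'a set \<Rightarrow> 'a \<Rightarrow> 'a \<Rightarrow> 'a \<Rightarrow> bool" where
  "HN_reduced G M \<Delta> \<delta> \<alpha> \<longleftrightarrow>
     (\<exists>a (p::int). \<alpha> = a \<otimes>\<^bsub>G\<^esub> (\<Delta> [^]\<^bsub>G\<^esub> p) \<and> unmovable G M \<Delta> a \<and>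
        N_reduced G M \<delta> a \<and>
        (p = 0 \<or> (p < 0 \<and> \<not> leL G M (inv\<^bsub>G\<^esub> \<delta> \<otimes>\<^bsub>G\<^esub> \<Delta>) a)))"

end

theory Submission
  imports Defs
begin

lemma lprod_Nil[simp]: "lprod G [] = \<one>\<^bsub>G\<^esub>" by (simp add: lprod_def)
lemma lprod_Cons[simp]: "lprod G (x # xs) = x \<otimes>\<^bsub>G\<^esub> lprod G xs" by (simp add: lprod_def)

locale gctx = group G for G (structure) +
  fixes M :: "'a set" and \<Delta> :: 'a and H N :: "'a set" and \<delta> :: 'a
  assumes sub: "submonoid_of G M"
  and pos: "M \<inter> (\<lambda>x. inv x) ` M = {\<one>}"
  and balD: "balanced G M \<Delta>"
  and noeth: "noetherian G M"
  and genM: "monoid_gen G (Div G M \<Delta>) = M"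
  and genG: "generate G (Div G M \<Delta>) = carrier G"
  and lat: "lattice_L G M"
  and bald: "balanced G M \<delta>"
  and Hdef: "H = generate G (Div G M \<delta>)"
  and Ndef: "N = monoid_gen G (Div G M \<delta>)"
  and Divd: "Div G M \<delta> = Div G M \<Delta> \<inter> N"
begin

abbreviation le :: "'a \<Rightarrow> 'a \<Rightarrow> bool" (infix "\<lessapprox>" 50) where "x \<lessapprox> y \<equiv> leL G M x y"

lemma cancel1[simp]: "x \<in> carrier G \<Longrightarrow> z \<in> carrier G \<Longrightarrow> x \<otimes> (inv x \<otimes> z) = z"
  by (simp add: m_assoc[symmetric])
lemma cancel2[simp]: "x \<in> carrier G \<Longrightarrow> z \<in> carrier G \<Longrightarrow> inv x \<otimes> (x \<otimes> z) = z"
  by (simp add: m_assoc[symmetric])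

lemma M_carr: "M \<subseteq> carrier G" using sub by (auto simp: submonoid_of_def)
lemma M_carrI[simp]: "x \<in> M \<Longrightarrow> x \<in> carrier G" using M_carr by auto
lemma one_M[simp]: "\<one> \<in> M" using sub by (auto simp: submonoid_of_def)
lemma mult_M[simp,intro]: "x \<in> M \<Longrightarrow> y \<in> M \<Longrightarrow> x \<otimes> y \<in> M" using sub by (auto simp: submonoid_of_def)
lemma M_inv_one: "x \<in> M \<Longrightarrow> inv x \<in> M \<Longrightarrow> x = \<one>"
proof -
  assume a: "x \<in> M" "inv x \<in> M"
  then have "x \<in> (\<lambda>x. inv x) ` M" by (metis M_carrI image_eqI inv_inv)
  then show ?thesis using pos a by blast
qed

lemma le_def': "x \<lessapprox> y \<longleftrightarrow> inv x \<otimes> y \<in> M" by (simp add: leL_def)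

lemma le_refl[simp]: "x \<in> carrier G \<Longrightarrow> x \<lessapprox> x" by (simp add: le_def')
lemma le_trans: "x \<in> carrier G \<Longrightarrow> y \<in> carrier G \<Longrightarrow> z \<in> carrier G \<Longrightarrow> x \<lessapprox> y \<Longrightarrow> y \<lessapprox> z \<Longrightarrow> x \<lessapprox> z"
proof -
  assume c: "x \<in> carrier G" "y \<in> carrier G" "z \<in> carrier G" and l: "x \<lessapprox> y" "y \<lessapprox> z"
  have "inv x \<otimes> z = (inv x \<otimes> y) \<otimes> (inv y \<otimes> z)" using c by (simp add: m_assoc)
  moreover have "(inv x \<otimes> y) \<otimes> (inv y \<otimes> z) \<in> M" using l unfolding le_def' by (rule mult_M)
  ultimately show ?thesis unfolding le_def' by simp
qed
lemma le_antisym: "x \<in> carrier G \<Longrightarrow> y \<in> carrier G \<Longrightarrow> x \<lessapprox> y \<Longrightarrow> y \<lessapprox> x \<Longrightarrow> x = y"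
proof -
  assume c: "x \<in> carrier G" "y \<in> carrier G" and l: "x \<lessapprox> y" "y \<lessapprox> x"
  have "inv (inv x \<otimes> y) = inv y \<otimes> x" using c by (simp add: inv_mult_group)
  then have "inv x \<otimes> y = \<one>" using l M_inv_one[of "inv x \<otimes> y"] unfolding le_def' by simp
  then have "x \<otimes> (inv x \<otimes> y) = x" using c by simp
  then show ?thesis using c by simp
qed
lemma le_mult_left: "g \<in> carrier G \<Longrightarrow> x \<in> carrier G \<Longrightarrow> y \<in> carrier G \<Longrightarrow> (g \<otimes> x \<lessapprox> g \<otimes> y) \<longleftrightarrow> x \<lessapprox> y"
proof -
  assume c: "g \<in> carrier G" "x \<in> carrier G" "y \<in> carrier G"
  have "inv (g \<otimes> x) \<otimes> (g \<otimes> y) = inv x \<otimes> y" using c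
    by (simp add: inv_mult_group m_assoc)
  then show ?thesis unfolding le_def' by simp
qed
lemma one_le: "x \<in> carrier G \<Longrightarrow> \<one> \<lessapprox> x \<longleftrightarrow> x \<in> M" by (simp add: le_def')
lemma le_multM: "x \<in> carrier G \<Longrightarrow> m \<in> M \<Longrightarrow> x \<lessapprox> x \<otimes> m"
  by (simp add: le_def' m_assoc[symmetric])
lemma le_E: "x \<lessapprox> y \<Longrightarrow> x \<in> carrier G \<Longrightarrow> y \<in> carrier G \<Longrightarrow> y = x \<otimes> (inv x \<otimes> y) \<and> inv x \<otimes> y \<in> M"
  by (simp add: le_def' m_assoc[symmetric])
lemma le_one_M: "x \<in> M \<Longrightarrow> x \<lessapprox> \<one> \<Longrightarrow> x = \<one>"
  using le_antisym[of x "\<one>"] one_le[of x] by simp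

lemma le_carrier_M: "x \<in> M \<Longrightarrow> y \<in> carrier G \<Longrightarrow> x \<lessapprox> y \<Longrightarrow> y \<in> M"
  by (metis M_carrI le_trans one_closed one_le)

section \<open>meets and joins\<close>

lemma glb_unique: "is_glbL G M c x y \<Longrightarrow> is_glbL G M c' x y \<Longrightarrow> c = c'"
  unfolding is_glbL_def by (meson le_antisym)
lemma lub_unique: "is_lubL G M c x y \<Longrightarrow> is_lubL G M c' x y \<Longrightarrow> c = c'"
  unfolding is_lubL_def by (meson le_antisym)

definition meet where "meet x y = meetL G M x y"
definition join where "join x y = (THE c. is_lubL G M c x y)"

lemma meet_glb: assumes "x \<in> carrier G" "y \<in> carrier G" shows "is_glbL G M (meet x y) x y"
proof -
  obtain c where c: "is_glbL G M c x y" using lat assms unfolding lattice_L_def by blast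
  then have "(THE c. is_glbL G M c x y) = c" using glb_unique by blast
  then show ?thesis using c by (simp add: meet_def meetL_def)
qed
lemma join_lub: assumes "x \<in> carrier G" "y \<in> carrier G" shows "is_lubL G M (join x y) x y"
proof -
  obtain c where c: "is_lubL G M c x y" using lat assms unfolding lattice_L_def by blast
  then have "(THE c. is_lubL G M c x y) = c" using lub_unique by blast
  then show ?thesis using c by (simp add: join_def)
qed

context fixes x y assumes xy: "x \<in> carrier G" "y \<in> carrier G"
begin
lemma meet_closed[simp]: "meet x y \<in> carrier G" using meet_glb[OF xy] by (simp add: is_glbL_def)
lemma meet_le1: "meet x y \<lessapprox> x" using meet_glb[OF xy] by (simp add: is_glbL_def)
lemma meet_le2: "meet x y \<lessapprox> y" using meet_glb[OF xy] by (simp add: is_glbL_def)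
lemma meet_greatest: "z \<in> carrier G \<Longrightarrow> z \<lessapprox> x \<Longrightarrow> z \<lessapprox> y \<Longrightarrow> z \<lessapprox> meet x y"
  using meet_glb[OF xy] by (simp add: is_glbL_def)
lemma join_closed[simp]: "join x y \<in> carrier G" using join_lub[OF xy] by (simp add: is_lubL_def)
lemma join_ge1: "x \<lessapprox> join x y" using join_lub[OF xy] by (simp add: is_lubL_def)
lemma join_ge2: "y \<lessapprox> join x y" using join_lub[OF xy] by (simp add: is_lubL_def)
lemma join_least: "z \<in> carrier G \<Longrightarrow> x \<lessapprox> z \<Longrightarrow> y \<lessapprox> z \<Longrightarrow> join x y \<lessapprox> z"
  using join_lub[OF xy] by (simp add: is_lubL_def)
end

lemma meet_M: "x \<in> M \<Longrightarrow> y \<in> M \<Longrightarrow> meet x y \<in> M"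
  by (metis M_carrI meet_closed meet_greatest one_closed one_le)

section \<open>divisors\<close>

lemma Div_iff: "s \<in> Div G M a \<longleftrightarrow> s \<in> M \<and> s \<lessapprox> a" by (simp add: Div_def DivL_def)

lemma balanced_R: assumes "balanced G M a" "s \<in> Div G M a" shows "a \<otimes> inv s \<in> M"
  using assms by (auto simp: balanced_def Div_def DivR_def leR_def)
lemma balanced_RI: assumes "balanced G M a" "s \<in> M" "a \<otimes> inv s \<in> M" shows "s \<in> Div G M a"
  using assms by (auto simp: balanced_def Div_def DivR_def leR_def)

lemma comp_L: assumes b: "balanced G M a" and s: "s \<in> Div G M a" shows "inv s \<otimes> a \<in> Div G M a"
proof -
  have a: "a \<in> M" using b by (simp add: balanced_def)
  have s': "s \<in> M" "s \<lessapprox> a" using s by (auto simp: Div_iff)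
  have t: "inv s \<otimes> a \<in> M" using s' by (simp add: le_def')
  have "a \<otimes> inv (inv s \<otimes> a) = s" using a s' by (simp add: inv_mult_group m_assoc[symmetric])
  then show ?thesis using balanced_RI[OF b t] s' by simp
qed
lemma comp_R: assumes b: "balanced G M a" and s: "s \<in> Div G M a" shows "a \<otimes> inv s \<in> Div G M a"
proof -
  have a: "a \<in> M" using b by (simp add: balanced_def)
  have s': "s \<in> M" "s \<lessapprox> a" using s by (auto simp: Div_iff)
  have t: "a \<otimes> inv s \<in> M" using balanced_R[OF b s] .
  have "inv (a \<otimes> inv s) \<otimes> a = s" using a s' by (simp add: inv_mult_group m_assoc)
  then show ?thesis using t s' by (simp add: Div_iff le_def')
qed
lemma conj_Div1: assumes b: "balanced G M a" and s: "s \<in> Div G M a" shows "inv a \<otimes> s \<otimes> a \<in> Div G M a"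
proof -
  have a: "a \<in> M" using b by (simp add: balanced_def)
  have s': "s \<in> M" using s by (auto simp: Div_iff)
  have "inv (inv s \<otimes> a) \<otimes> a = inv a \<otimes> s \<otimes> a" using a s' by (simp add: inv_mult_group m_assoc)
  then show ?thesis using comp_L[OF b comp_L[OF b s]] by simp
qed
lemma conj_Div2: assumes b: "balanced G M a" and s: "s \<in> Div G M a" shows "a \<otimes> s \<otimes> inv a \<in> Div G M a"
proof -
  have a: "a \<in> M" using b by (simp add: balanced_def)
  have s': "s \<in> M" using s by (auto simp: Div_iff)
  have "a \<otimes> inv (a \<otimes> inv s) = a \<otimes> s \<otimes> inv a" using a s' by (simp add: inv_mult_group m_assoc)
  then show ?thesis using comp_R[OF b comp_R[OF b s]] by simp
qed

lemma Div_in_M[simp]: "s \<in> Div G M a \<Longrightarrow> s \<in> M" by (simp add: Div_iff)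
lemma Div_in_carr[simp]: "s \<in> Div G M a \<Longrightarrow> s \<in> carrier G" by (simp add: Div_iff)

section \<open>generated monoids\<close>

lemma lprod_closed: "set xs \<subseteq> carrier G \<Longrightarrow> lprod G xs \<in> carrier G"
  by (induct xs) auto
lemma lprod_append: "set xs \<subseteq> carrier G \<Longrightarrow> set ys \<subseteq> carrier G \<Longrightarrow> lprod G (xs @ ys) = lprod G xs \<otimes> lprod G ys"
  by (induct xs) (auto simp: m_assoc lprod_closed)
lemma lprod_M: "set xs \<subseteq> M \<Longrightarrow> lprod G xs \<in> M"
  by (induct xs) auto

context fixes a assumes b: "balanced G M a"
begin
lemma a_M: "a \<in> M" using b by (simp add: balanced_def)
lemma Div_M: "Div G M a \<subseteq> M" by (auto simp: Div_iff)
lemma a_Div: "a \<in> Div G M a" using a_M by (simp add: Div_iff)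
lemma mg_M: "monoid_gen G (Div G M a) \<subseteq> M" using Div_M lprod_M by (auto simp: monoid_gen_def)
lemma mg_one: "\<one> \<in> monoid_gen G (Div G M a)" by (auto simp: monoid_gen_def intro: exI[of _ "[]"])
lemma mg_incl: "s \<in> Div G M a \<Longrightarrow> s \<in> monoid_gen G (Div G M a)"
  by (auto simp: monoid_gen_def intro!: exI[of _ "[s]"])
lemma mg_mult: "x \<in> monoid_gen G (Div G M a) \<Longrightarrow> y \<in> monoid_gen G (Div G M a) \<Longrightarrow> x \<otimes> y \<in> monoid_gen G (Div G M a)"
proof -
  assume "x \<in> monoid_gen G (Div G M a)" "y \<in> monoid_gen G (Div G M a)"
  then obtain xs ys where "x = lprod G xs" "set xs \<subseteq> Div G M a" "y = lprod G ys" "set ys \<subseteq> Div G M a"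
    by (auto simp: monoid_gen_def)
  moreover have "set xs \<subseteq> carrier G" "set ys \<subseteq> carrier G" using calculation Div_M M_carr by auto
  ultimately show ?thesis by (auto simp: monoid_gen_def lprod_append intro!: exI[of _ "xs @ ys"])
qed
lemma mg_conj1: "x \<in> monoid_gen G (Div G M a) \<Longrightarrow> inv a \<otimes> x \<otimes> a \<in> monoid_gen G (Div G M a)"
proof -
  assume "x \<in> monoid_gen G (Div G M a)"
  then obtain xs where x: "x = lprod G xs" "set xs \<subseteq> Div G M a" by (auto simp: monoid_gen_def)
  have "inv a \<otimes> lprod G xs \<otimes> a \<in> monoid_gen G (Div G M a)" using x(2)
  proof (induct xs)
    case Nil then show ?case using a_M mg_one by simp
  next
    case (Cons s xs)
    have c: "s \<in> carrier G" "lprod G xs \<in> carrier G" using Cons Div_M M_carr lprod_closed by auto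
    have "inv a \<otimes> lprod G (s # xs) \<otimes> a = (inv a \<otimes> s \<otimes> a) \<otimes> (inv a \<otimes> lprod G xs \<otimes> a)"
      using c a_M by (simp add: m_assoc)
    then show ?case using Cons mg_mult mg_incl conj_Div1[OF b] by auto
  qed
  then show ?thesis using x by simp
qed
lemma mg_conj2: "x \<in> monoid_gen G (Div G M a) \<Longrightarrow> a \<otimes> x \<otimes> inv a \<in> monoid_gen G (Div G M a)"
proof -
  assume "x \<in> monoid_gen G (Div G M a)"
  then obtain xs where x: "x = lprod G xs" "set xs \<subseteq> Div G M a" by (auto simp: monoid_gen_def)
  have "a \<otimes> lprod G xs \<otimes> inv a \<in> monoid_gen G (Div G M a)" using x(2)
  proof (induct xs)
    case Nil then show ?case using a_M mg_one by simp
  next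
    case (Cons s xs)
    have c: "s \<in> carrier G" "lprod G xs \<in> carrier G" using Cons Div_M M_carr lprod_closed by auto
    have "a \<otimes> lprod G (s # xs) \<otimes> inv a = (a \<otimes> s \<otimes> inv a) \<otimes> (a \<otimes> lprod G xs \<otimes> inv a)"
      using c a_M by (simp add: m_assoc)
    then show ?case using Cons mg_mult mg_incl conj_Div2[OF b] by auto
  qed
  then show ?thesis using x by simp
qed
lemma mg_conj1_pow: "x \<in> monoid_gen G (Div G M a) \<Longrightarrow> inv (a [^] (k::nat)) \<otimes> x \<otimes> a [^] k \<in> monoid_gen G (Div G M a)"
proof (induct k arbitrary: x)
  case 0 then show ?case using mg_M by auto
next
  case (Suc k)
  have c: "x \<in> carrier G" using Suc mg_M by auto
  have "inv (a [^] Suc k) \<otimes> x \<otimes> a [^] Suc k = inv a \<otimes> (inv (a [^] k) \<otimes> x \<otimes> a [^] k) \<otimes> a"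
    using c a_M by (simp add: m_assoc inv_mult_group)
  then show ?case using Suc mg_conj1 by simp
qed
lemma mg_conj2_pow: "x \<in> monoid_gen G (Div G M a) \<Longrightarrow> a [^] (k::nat) \<otimes> x \<otimes> inv (a [^] k) \<in> monoid_gen G (Div G M a)"
proof (induct k arbitrary: x)
  case 0 then show ?case using mg_M by auto
next
  case (Suc k)
  have c: "x \<in> carrier G" using Suc mg_M by auto
  have "a [^] Suc k \<otimes> x \<otimes> inv (a [^] Suc k) = a [^] k \<otimes> (a \<otimes> x \<otimes> inv a) \<otimes> inv (a [^] k)"
    using c a_M by (simp add: m_assoc inv_mult_group nat_pow_mult[symmetric] nat_pow_Suc2)
  then show ?case using Suc mg_conj2 by simp
qed
lemma mg_pow: "a [^] (k::nat) \<in> monoid_gen G (Div G M a)"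
  by (induct k) (auto simp: mg_one mg_mult mg_incl a_Div)

lemma gen_form: "h \<in> generate G (Div G M a) \<Longrightarrow> \<exists>k::nat. \<exists>n \<in> monoid_gen G (Div G M a). h = inv (a [^] k) \<otimes> n"
proof (induct rule: generate.induct)
  case one
  have "\<one> = inv (a [^] (0::nat)) \<otimes> \<one>" by simp
  then show ?case using mg_one by blast
next
  case (incl s)
  then have "s = inv (a [^] (0::nat)) \<otimes> s" by simp
  then show ?case using mg_incl incl by blast
next
  case (inv s)
  have c: "s \<in> carrier G" using inv Div_M by auto
  have "inv s = inv (a [^] (1::nat)) \<otimes> (a \<otimes> inv s)" using c a_M by (simp add: m_assoc[symmetric])
  then show ?case using mg_incl comp_R[OF b inv] by blast
next
  case (eng h1 h2)
  then obtain k1 k2 :: nat and n1 n2 where e: "n1 \<in> monoid_gen G (Div G M a)" "h1 = inv (a [^] k1) \<otimes> n1"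
    "n2 \<in> monoid_gen G (Div G M a)" "h2 = inv (a [^] k2) \<otimes> n2" by blast
  have c: "n1 \<in> carrier G" "n2 \<in> carrier G" "a \<in> carrier G" using e mg_M a_M by auto
  have "h1 \<otimes> h2 = inv (a [^] (k2 + k1)) \<otimes> ((a [^] k2 \<otimes> n1 \<otimes> inv (a [^] k2)) \<otimes> n2)"
    using c by (simp add: e m_assoc inv_mult_group nat_pow_mult[symmetric])
  then show ?case using mg_mult[OF mg_conj2_pow[OF e(1)] e(3)] by blast
qed
end

lemma D_M[simp]: "\<Delta> \<in> M" using a_M[OF balD] .
lemma d_M[simp]: "\<delta> \<in> M" using a_M[OF bald] .
lemma D_carr[simp]: "\<Delta> \<in> carrier G" by simp
lemma d_carr[simp]: "\<delta> \<in> carrier G" by simp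
lemma N_M: "N \<subseteq> M" using mg_M[OF bald] Ndef by simp
lemma N_M'[simp]: "x \<in> N \<Longrightarrow> x \<in> M" using N_M by auto
lemma N_carr[simp]: "x \<in> N \<Longrightarrow> x \<in> carrier G" by simp
lemma one_N[simp]: "\<one> \<in> N" using mg_one[OF bald] Ndef by simp
lemma mult_N[simp]: "x \<in> N \<Longrightarrow> y \<in> N \<Longrightarrow> x \<otimes> y \<in> N" using mg_mult[OF bald] Ndef by simp
lemma Divd_N: "s \<in> Div G M \<delta> \<Longrightarrow> s \<in> N" using mg_incl[OF bald] Ndef by simp
lemma d_N[simp]: "\<delta> \<in> N" using Divd_N a_Div[OF bald] by simp
lemma d_Div: "\<delta> \<in> Div G M \<delta>" using a_Div[OF bald] .
lemma d_le_D: "\<delta> \<lessapprox> \<Delta>" using d_Div Divd by (simp add: Div_iff)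
lemma om_M[simp]: "inv \<delta> \<otimes> \<Delta> \<in> M" using d_le_D by (simp add: le_def')
lemma om_carr[simp]: "inv \<delta> \<otimes> \<Delta> \<in> carrier G" by simp
lemma dpow_N[simp]: "\<delta> [^] (k::nat) \<in> N" using mg_pow[OF bald] Ndef by simp
lemma Dpow_M[simp]: "\<Delta> [^] (k::nat) \<in> M" using mg_pow[OF balD] genM by simp

lemma phi1: "m \<in> M \<Longrightarrow> inv \<Delta> \<otimes> m \<otimes> \<Delta> \<in> M" using mg_conj1[OF balD] genM by simp
lemma phi2: "m \<in> M \<Longrightarrow> \<Delta> \<otimes> m \<otimes> inv \<Delta> \<in> M" using mg_conj2[OF balD] genM by simp
lemma phi1_pow: "m \<in> M \<Longrightarrow> inv (\<Delta> [^] (k::nat)) \<otimes> m \<otimes> \<Delta> [^] k \<in> M" using mg_conj1_pow[OF balD] genM by simp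
lemma psi1: "m \<in> N \<Longrightarrow> inv \<delta> \<otimes> m \<otimes> \<delta> \<in> N" using mg_conj1[OF bald] Ndef by simp
lemma psi2: "m \<in> N \<Longrightarrow> \<delta> \<otimes> m \<otimes> inv \<delta> \<in> N" using mg_conj2[OF bald] Ndef by simp

lemma carrier_form: "x \<in> carrier G \<Longrightarrow> \<exists>k::nat. \<exists>m\<in>M. x = inv (\<Delta> [^] k) \<otimes> m"
  using gen_form[OF balD] genG genM by simp
lemma H_form: "h \<in> H \<Longrightarrow> \<exists>k::nat. \<exists>n\<in>N. h = inv (\<delta> [^] k) \<otimes> n"
  using gen_form[OF bald] Hdef Ndef by simp
lemma H_subgroup: "subgroup H G"
proof -
  have "Div G M \<delta> \<subseteq> carrier G" by auto
  then show ?thesis using Hdef generate_is_subgroup[of "Div G M \<delta>"] by simp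
qed
lemma H_carr[simp]: "h \<in> H \<Longrightarrow> h \<in> carrier G" by (rule subgroup.mem_carrier[OF H_subgroup])

section \<open>length\<close>

definition len where "len a = (GREATEST n. \<exists>xs. set xs \<subseteq> M - {\<one>} \<and> lprod G xs = a \<and> length xs = n)"

lemma len_bound: "a \<in> M \<Longrightarrow> \<exists>b. \<forall>xs. set xs \<subseteq> M - {\<one>} \<and> lprod G xs = a \<longrightarrow> length xs \<le> b"
  using noeth by (auto simp: noetherian_def)

lemma len_ex: assumes "a \<in> M" shows "\<exists>xs. set xs \<subseteq> M - {\<one>} \<and> lprod G xs = a \<and> length xs = len a"
proof -
  obtain b where b: "\<forall>xs. set xs \<subseteq> M - {\<one>} \<and> lprod G xs = a \<longrightarrow> length xs \<le> b" using len_bound[OF assms] by blast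
  define ys where "ys = (if a = \<one> then [] else [a])"
  have "set ys \<subseteq> M - {\<one>} \<and> lprod G ys = a" using assms by (auto simp: ys_def)
  then have "\<exists>xs. set xs \<subseteq> M - {\<one>} \<and> lprod G xs = a \<and> length xs = length ys" by blast
  from GreatestI_nat[where P="\<lambda>n. \<exists>xs. set xs \<subseteq> M - {\<one>} \<and> lprod G xs = a \<and> length xs = n", OF this] b
  show ?thesis unfolding len_def by blast
qed

lemma len_ge: assumes "a \<in> M" "set xs \<subseteq> M - {\<one>}" "lprod G xs = a" shows "length xs \<le> len a"
proof -
  obtain b where b: "\<forall>xs. set xs \<subseteq> M - {\<one>} \<and> lprod G xs = a \<longrightarrow> length xs \<le> b" using len_bound[OF assms(1)] by blast
  have "\<exists>ys. set ys \<subseteq> M - {\<one>} \<and> lprod G ys = a \<and> length ys = length xs" using assms by blast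
  from Greatest_le_nat[where P="\<lambda>n. \<exists>xs. set xs \<subseteq> M - {\<one>} \<and> lprod G xs = a \<and> length xs = n", OF this] b
  show ?thesis unfolding len_def by blast
qed

lemma len_less1: assumes "a \<in> M" "b \<in> M" "b \<noteq> \<one>" shows "len a < len (a \<otimes> b)"
proof -
  obtain xs where xs: "set xs \<subseteq> M - {\<one>}" "lprod G xs = a" "length xs = len a" using len_ex[OF assms(1)] by blast
  have c: "set xs \<subseteq> carrier G" using xs M_carr by auto
  have "lprod G (xs @ [b]) = a \<otimes> b" using xs c assms by (simp add: lprod_append)
  then have "length (xs @ [b]) \<le> len (a \<otimes> b)" using len_ge[of "a \<otimes> b" "xs @ [b]"] xs assms by auto
  then show ?thesis using xs by simp
qed
lemma len_less2: assumes "a \<in> M" "b \<in> M" "a \<noteq> \<one>" shows "len b < len (a \<otimes> b)"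
proof -
  obtain xs where xs: "set xs \<subseteq> M - {\<one>}" "lprod G xs = b" "length xs = len b" using len_ex[OF assms(2)] by blast
  have "lprod G (a # xs) = a \<otimes> b" using xs by simp
  then have "length (a # xs) \<le> len (a \<otimes> b)" using len_ge[of "a \<otimes> b" "a # xs"] xs assms by auto
  then show ?thesis using xs by simp
qed

lemma meet_D_nontriv: assumes "x \<in> M" "x \<noteq> \<one>" shows "meet x \<Delta> \<noteq> \<one>"
proof -
  obtain xs where xs: "set xs \<subseteq> Div G M \<Delta>" "x = lprod G xs" using assms genM by (auto simp: monoid_gen_def)
  have "lprod G xs \<noteq> \<one> \<Longrightarrow> meet (lprod G xs) \<Delta> \<noteq> \<one>" using xs(1)
  proof (induct xs)
    case Nil then show ?case by simp
  next
    case (Cons s xs)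
    have "set xs \<subseteq> M" using Cons.prems by auto
    then have w: "lprod G xs \<in> M" by (rule lprod_M)
    have s: "s \<in> M" "s \<lessapprox> \<Delta>" using Cons by (auto simp: Div_iff)
    show ?case
    proof (cases "s = \<one>")
      case True then show ?thesis using Cons w by auto
    next
      case False
      have "s \<lessapprox> lprod G (s # xs)" using le_multM[of s "lprod G xs"] s w by simp
      then have "s \<lessapprox> meet (lprod G (s # xs)) \<Delta>" using meet_greatest s w by simp
      moreover have "meet (lprod G (s # xs)) \<Delta> = \<one> \<Longrightarrow> s = \<one>" using calculation le_one_M[of s] s(1) by simp
      ultimately show ?thesis using False by blast
    qed
  qed
  then show ?thesis using assms xs by simp
qed

abbreviation "\<omega> \<equiv> inv \<delta> \<otimes> \<Delta>"

lemma d_om: "\<delta> \<otimes> \<omega> = \<Delta>" by (simp add: m_assoc[symmetric])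

lemma Div_d_iff: "s \<in> Div G M \<delta> \<longleftrightarrow> s \<in> M \<and> s \<lessapprox> \<delta>" by (rule Div_iff)

lemma coprime_om: assumes "c \<in> M" "c \<lessapprox> \<delta>" "c \<lessapprox> \<omega>" shows "c = \<one>"
proof -
  have cD: "c \<in> Div G M \<delta>" using assms by (simp add: Div_iff)
  then have cN: "c \<in> N" by (rule Divd_N)
  have "\<delta> \<otimes> c \<lessapprox> \<delta> \<otimes> \<omega>" using assms le_mult_left[of \<delta> c \<omega>] by simp
  then have "\<delta> \<otimes> c \<lessapprox> \<Delta>" using d_om by simp
  then have "\<delta> \<otimes> c \<in> Div G M \<Delta> \<inter> N" using cN assms by (simp add: Div_iff)
  then have "\<delta> \<otimes> c \<in> Div G M \<delta>" using Divd by simp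
  then have "\<delta> \<otimes> c \<lessapprox> \<delta> \<otimes> \<one>" by (simp add: Div_iff)
  then have "c \<lessapprox> \<one>" using le_mult_left[of \<delta> c \<one>] assms by simp
  then show ?thesis using le_one_M assms by simp
qed

lemma D_le_sD: "s \<in> M \<Longrightarrow> \<Delta> \<lessapprox> s \<otimes> \<Delta>"
proof -
  assume s: "s \<in> M"
  have "\<Delta> \<otimes> (inv \<Delta> \<otimes> s \<otimes> \<Delta>) = s \<otimes> \<Delta>" using s by (simp add: m_assoc)
  then show ?thesis using le_multM[OF D_carr phi1[OF s]] by simp
qed

lemma PC1: assumes "n \<in> N" shows "meet n \<Delta> \<lessapprox> \<delta>"
proof -
  obtain xs where xs: "set xs \<subseteq> Div G M \<delta>" "n = lprod G xs" using assms Ndef by (auto simp: monoid_gen_def)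
  have "meet (lprod G xs) \<Delta> \<lessapprox> \<delta>" using xs(1)
  proof (induct xs)
    case Nil
    have "meet \<one> \<Delta> \<lessapprox> \<one>" by (rule meet_le1) auto
    moreover have "\<one> \<lessapprox> \<delta>" using one_le by simp
    ultimately show ?case using le_trans[of _ \<one> \<delta>] by simp
  next
    case (Cons s xs)
    have "set xs \<subseteq> M" using Cons.prems by auto
    then have wM: "lprod G xs \<in> M" by (rule lprod_M)
    have sD: "s \<in> Div G M \<delta>" using Cons.prems by simp
    then have sM: "s \<in> M" by simp
    define t where "t = meet (s \<otimes> lprod G xs) \<Delta>"
    have tc: "t \<in> carrier G" using t_def wM sM by simp
    have t1: "t \<lessapprox> s \<otimes> lprod G xs" using t_def wM sM meet_le1 by simp
    have t2: "t \<lessapprox> \<Delta>" using t_def wM sM meet_le2 by simp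
    have t3: "t \<lessapprox> s \<otimes> \<Delta>" using le_trans[OF tc D_carr _ t2 D_le_sD[OF sM]] sM by simp
    have "s \<otimes> (inv s \<otimes> t) = t" using tc sM by simp
    then have "inv s \<otimes> t \<lessapprox> lprod G xs" "inv s \<otimes> t \<lessapprox> \<Delta>"
      using t1 t3 le_mult_left[of s "inv s \<otimes> t"] tc sM wM by auto
    then have "inv s \<otimes> t \<lessapprox> meet (lprod G xs) \<Delta>" using meet_greatest tc sM wM by simp
    then have "inv s \<otimes> t \<lessapprox> \<delta>" using Cons(1) Cons.prems le_trans[of "inv s \<otimes> t" "meet (lprod G xs) \<Delta>" \<delta>] tc sM wM
      by simp
    then have t4: "t \<lessapprox> s \<otimes> \<delta>" using le_mult_left[of s "inv s \<otimes> t" \<delta>] tc sM by simp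
    define s' where "s' = inv \<delta> \<otimes> s \<otimes> \<delta>"
    have s'D: "s' \<in> Div G M \<delta>" using conj_Div1[OF bald sD] s'_def by simp
    have "s \<otimes> \<delta> = \<delta> \<otimes> s'" using s'_def sM by (simp add: m_assoc)
    then have "\<delta> \<otimes> (inv \<delta> \<otimes> t) \<lessapprox> \<delta> \<otimes> s'" "\<delta> \<otimes> (inv \<delta> \<otimes> t) \<lessapprox> \<delta> \<otimes> \<omega>" using t4 t2 tc d_om by auto
    then have a1: "inv \<delta> \<otimes> t \<lessapprox> s'"
      using le_mult_left[of \<delta> "inv \<delta> \<otimes> t"] tc s'D by auto
    have a2: "inv \<delta> \<otimes> t \<lessapprox> \<omega>" using le_mult_left[of \<delta> "inv \<delta> \<otimes> t" \<omega>] t2 tc by simp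
    note a1 = a1 a2
    define c where "c = meet s' \<omega>"
    have cM: "c \<in> M" using c_def meet_M s'D by simp
    have "c \<lessapprox> s'" "c \<lessapprox> \<omega>" using c_def meet_le1 meet_le2 s'D by auto
    moreover have "s' \<lessapprox> \<delta>" using s'D by (simp add: Div_iff)
    ultimately have "c \<lessapprox> \<delta>" "c \<lessapprox> \<omega>" using le_trans[of c s' \<delta>] cM s'D by auto
    then have c1: "c = \<one>" using coprime_om cM by simp
    have "inv \<delta> \<otimes> t \<lessapprox> c" using c_def meet_greatest a1 tc s'D by simp
    then have "\<delta> \<otimes> (inv \<delta> \<otimes> t) \<lessapprox> \<delta> \<otimes> \<one>" using c1 le_mult_left[of \<delta> "inv \<delta> \<otimes> t" \<one>] tc by simp
    then show ?case using t_def tc by simp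
  qed
  then show ?thesis using xs by simp
qed

lemma PC2: assumes "set xs \<subseteq> Div G M \<delta>" "u \<in> Div G M \<delta>" "u \<lessapprox> lprod G xs"
  shows "inv u \<otimes> lprod G xs \<in> N"
  using assms
proof (induct xs arbitrary: u)
  case Nil
  then have "u = \<one>" using le_one_M by simp
  then show ?case by simp
next
  case (Cons s xs)
  have "set xs \<subseteq> M" using Cons.prems by auto
  then have wM: "lprod G xs \<in> M" by (rule lprod_M)
  have sD: "s \<in> Div G M \<delta>" using Cons.prems by simp
  then have sM: "s \<in> M" by simp
  have uD: "u \<in> Div G M \<delta>" using Cons.prems by simp
  then have uM: "u \<in> M" by simp
  define w where "w = lprod G xs"
  have wM2: "w \<in> M" using wM by (simp add: w_def)
  define v where "v = join u s"
  have vc: "v \<in> carrier G" using v_def uM sM by simp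
  have uv: "u \<lessapprox> v" and sv: "s \<lessapprox> v" using v_def join_ge1 join_ge2 uM sM by auto
  have "u \<lessapprox> \<delta>" "s \<lessapprox> \<delta>" using uD sD by (auto simp: Div_iff)
  then have vd: "v \<lessapprox> \<delta>" using v_def join_least uM sM by simp
  have "s \<lessapprox> s \<otimes> w" using le_multM sM wM w_def by simp
  moreover have "u \<lessapprox> s \<otimes> w" using Cons.prems w_def by simp
  ultimately have vsw: "v \<lessapprox> s \<otimes> w" using v_def join_least uM sM wM2 by simp
  define z where "z = inv s \<otimes> v"
  have zM: "z \<in> M" using z_def sv by (simp add: le_def')
  have vz: "v = s \<otimes> z" using z_def vc sM by simp
  have zw: "z \<lessapprox> w" using vsw vz le_mult_left[of s z w] zM sM wM2 by simp
  have sc: "inv s \<otimes> \<delta> \<in> Div G M \<delta>" using comp_L[OF bald sD] .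
  have "z \<lessapprox> inv s \<otimes> \<delta>" using vd vz le_mult_left[of s z "inv s \<otimes> \<delta>"] zM sM by simp
  moreover have "inv s \<otimes> \<delta> \<lessapprox> \<delta>" using sc by (simp add: Div_iff)
  ultimately have "z \<lessapprox> \<delta>" using le_trans[of z "inv s \<otimes> \<delta>" \<delta>] zM sM by simp
  then have zD: "z \<in> Div G M \<delta>" using zM by (simp add: Div_iff)
  have IH: "inv z \<otimes> w \<in> N" using Cons(1)[of z] Cons.prems zD zw w_def by simp
  define y where "y = inv u \<otimes> v"
  have yM: "y \<in> M" using y_def uv by (simp add: le_def')
  have vy: "v = u \<otimes> y" using y_def vc uM by simp
  have uc: "inv u \<otimes> \<delta> \<in> Div G M \<delta>" using comp_L[OF bald uD] .
  have "y \<lessapprox> inv u \<otimes> \<delta>" using vd vy le_mult_left[of u y "inv u \<otimes> \<delta>"] yM uM by simp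
  moreover have "inv u \<otimes> \<delta> \<lessapprox> \<delta>" using uc by (simp add: Div_iff)
  ultimately have "y \<lessapprox> \<delta>" using le_trans[of y "inv u \<otimes> \<delta>" \<delta>] yM uM by simp
  then have "y \<in> Div G M \<delta>" using yM by (simp add: Div_iff)
  then have yN: "y \<in> N" by (rule Divd_N)
  have "inv u \<otimes> (s \<otimes> w) = y \<otimes> (inv z \<otimes> w)"
    unfolding y_def z_def using vc uM sM wM2 by (simp add: m_assoc inv_mult_group)
  then show ?case using yN IH w_def by simp
qed

lemma PC: assumes "n \<in> N" "x \<in> M" "x \<lessapprox> n" shows "x \<in> N \<and> inv x \<otimes> n \<in> N"
  using assms
proof (induct "len n" arbitrary: n x rule: less_induct)
  case less
  show ?case
  proof (cases "x = \<one>")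
    case True then show ?thesis using less.prems by simp
  next
    case False
    define u where "u = meet x \<Delta>"
    have u1: "u \<noteq> \<one>" using meet_D_nontriv False less.prems u_def by simp
    have uM: "u \<in> M" using u_def meet_M less.prems by simp
    have "u \<lessapprox> x" "u \<lessapprox> \<Delta>" using u_def meet_le1 meet_le2 less.prems by auto
    then have "u \<lessapprox> n" using le_trans[of u x n] less.prems uM by simp
    then have "u \<lessapprox> meet n \<Delta>" using meet_greatest \<open>u \<lessapprox> \<Delta>\<close> uM less.prems by simp
    then have "u \<lessapprox> \<delta>" using PC1[of n] le_trans[of u "meet n \<Delta>" \<delta>] less.prems uM by simp
    then have uD: "u \<in> Div G M \<delta>" using uM by (simp add: Div_iff)
    obtain xs where xs: "set xs \<subseteq> Div G M \<delta>" "n = lprod G xs" using less.prems Ndef by (auto simp: monoid_gen_def)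
    define n' where "n' = inv u \<otimes> n"
    have n'N: "n' \<in> N" using PC2[OF xs(1) uD] \<open>u \<lessapprox> n\<close> xs n'_def by simp
    have nn': "n = u \<otimes> n'" using n'_def uM less.prems by simp
    have lenl: "len n' < len n" using len_less2[of u n'] nn' uM n'N u1 by simp
    define x' where "x' = inv u \<otimes> x"
    have x'M: "x' \<in> M" using x'_def \<open>u \<lessapprox> x\<close> by (simp add: le_def')
    have xx': "x = u \<otimes> x'" using x'_def uM less.prems by simp
    have "x' \<lessapprox> n'" using less.prems xx' nn' le_mult_left[of u x' n'] x'M n'N uM by simp
    then have IH: "x' \<in> N \<and> inv x' \<otimes> n' \<in> N" using less(1)[OF lenl n'N x'M] by simp
    have "x \<in> N" using xx' IH Divd_N[OF uD] by simp
    moreover have "inv x \<otimes> n = inv x' \<otimes> n'" using xx' n'_def x'M uM less.prems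
      by (simp add: m_assoc inv_mult_group)
    ultimately show ?thesis using IH by simp
  qed
qed

lemma dpow_absorb: assumes "m \<in> N" shows "\<delta> [^] (k::nat) \<lessapprox> m \<otimes> \<delta> [^] k"
proof -
  have e: "m \<otimes> \<delta> [^] k = \<delta> [^] k \<otimes> (inv (\<delta> [^] k) \<otimes> m \<otimes> \<delta> [^] k)" using assms by (simp add: m_assoc)
  have "inv (\<delta> [^] k) \<otimes> m \<otimes> \<delta> [^] k \<in> N" using mg_conj1_pow[OF bald, of m k] assms Ndef by simp
  then show ?thesis using e le_multM[of "\<delta> [^] k" "inv (\<delta> [^] k) \<otimes> m \<otimes> \<delta> [^] k"] by simp
qed

lemma dpow_mono: "k \<le> j \<Longrightarrow> \<delta> [^] (k::nat) \<lessapprox> \<delta> [^] j"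
proof -
  assume "k \<le> j"
  then obtain i where "j = k + i" by (metis le_add_diff_inverse)
  then have "\<delta> [^] j = \<delta> [^] k \<otimes> \<delta> [^] i" by (simp add: nat_pow_mult)
  then show ?thesis using le_multM[of "\<delta> [^] k" "\<delta> [^] i"] by simp
qed

lemma d_comm: "\<delta> \<otimes> \<delta> [^] (k::nat) = \<delta> [^] k \<otimes> \<delta>"
  by (metis nat_pow_Suc nat_pow_Suc2 d_carr)

lemma N_le_dpow: assumes "n \<in> N" shows "\<exists>K::nat. n \<lessapprox> \<delta> [^] K"
proof -
  obtain xs where xs: "set xs \<subseteq> Div G M \<delta>" "n = lprod G xs" using assms Ndef by (auto simp: monoid_gen_def)
  have "lprod G xs \<lessapprox> \<delta> [^] length xs" using xs(1)
  proof (induct xs)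
    case Nil then show ?case by simp
  next
    case (Cons s xs)
    have "set xs \<subseteq> M" using Cons.prems by auto
    then have wM: "lprod G xs \<in> M" by (rule lprod_M)
    have sD: "s \<in> Div G M \<delta>" using Cons.prems by simp
    then have sM: "s \<in> M" by simp
    have a: "s \<otimes> lprod G xs \<lessapprox> s \<otimes> \<delta> [^] length xs" using Cons le_mult_left[of s "lprod G xs" "\<delta> [^] length xs"] sM wM by simp
    have sc: "inv s \<otimes> \<delta> \<in> N" using Divd_N[OF comp_L[OF bald sD]] .
    have "\<delta> [^] length xs \<lessapprox> (inv s \<otimes> \<delta>) \<otimes> \<delta> [^] length xs" by (rule dpow_absorb[OF sc])
    then have "s \<otimes> \<delta> [^] length xs \<lessapprox> s \<otimes> ((inv s \<otimes> \<delta>) \<otimes> \<delta> [^] length xs)"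
      using le_mult_left[of s "\<delta> [^] length xs"] sM sc by simp
    moreover have "s \<otimes> ((inv s \<otimes> \<delta>) \<otimes> \<delta> [^] length xs) = \<delta> [^] length (s # xs)" using sM
      using d_comm[of "length xs"] by (simp add: m_assoc[symmetric])
    ultimately have "s \<otimes> \<delta> [^] length xs \<lessapprox> \<delta> [^] length (s # xs)" by simp
    then show ?case using a le_trans[of "s \<otimes> lprod G xs" "s \<otimes> \<delta> [^] length xs" "\<delta> [^] length (s # xs)"] sM wM by simp
  qed
  then show ?thesis using xs by blast
qed

lemma join_N: assumes "n \<in> N" "m \<in> N" shows "join n m \<in> N"
proof -
  obtain K1 K2 :: nat where k: "n \<lessapprox> \<delta> [^] K1" "m \<lessapprox> \<delta> [^] K2" using N_le_dpow assms by blast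
  have "n \<lessapprox> \<delta> [^] (K1 + K2)" using k(1) dpow_mono[of K1 "K1 + K2"] le_trans[of n "\<delta> [^] K1"] assms by simp
  moreover have "m \<lessapprox> \<delta> [^] (K1 + K2)" using k(2) dpow_mono[of K2 "K1 + K2"] le_trans[of m "\<delta> [^] K2"] assms by simp
  ultimately have j: "join n m \<lessapprox> \<delta> [^] (K1 + K2)" using join_least assms by simp
  have "n \<lessapprox> join n m" using join_ge1 assms by simp
  then have "join n m \<in> M" using le_carrier_M[of n "join n m"] assms by simp
  then show ?thesis using PC[OF dpow_N _ j] by simp
qed

lemma N_red_one: assumes "y \<in> N" "meet y \<delta> = \<one>" shows "y = \<one>"
proof (rule ccontr)
  assume y1: "y \<noteq> \<one>"
  define u where "u = meet y \<Delta>"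
  have u1: "u \<noteq> \<one>" using meet_D_nontriv y1 assms u_def by simp
  have uM: "u \<in> M" using u_def meet_M assms by simp
  have "u \<lessapprox> \<delta>" using PC1[OF assms(1)] u_def by simp
  moreover have "u \<lessapprox> y" using u_def meet_le1 assms by simp
  ultimately have "u \<lessapprox> meet y \<delta>" using meet_greatest[of y \<delta> u] assms(1) uM by simp
  then have "u \<lessapprox> \<one>" using assms(2) by simp
  then show False using le_one_M uM u1 by simp
qed

lemma lemK: assumes "x \<in> M" "meet x \<delta> = \<one>" "m \<in> N" "n \<in> N" "n \<lessapprox> m \<otimes> x" shows "n \<lessapprox> m"
proof -
  define v where "v = join n m"
  have vN: "v \<in> N" using join_N assms v_def by simp
  have "m \<lessapprox> m \<otimes> x" using le_multM assms by simp
  then have vmx: "v \<lessapprox> m \<otimes> x" using join_least assms v_def by simp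
  have mv: "m \<lessapprox> v" using join_ge2 assms v_def by simp
  have nv: "n \<lessapprox> v" using join_ge1 assms v_def by simp
  define y where "y = inv m \<otimes> v"
  have yN: "y \<in> N" using PC[OF vN _ mv] assms y_def by simp
  have vy: "v = m \<otimes> y" using y_def vN assms by simp
  have yx: "y \<lessapprox> x" using vmx vy le_mult_left[of m y x] yN assms by simp
  have "meet y \<delta> \<lessapprox> y" "meet y \<delta> \<lessapprox> \<delta>" using meet_le1 meet_le2 yN by auto
  then have "meet y \<delta> \<lessapprox> x" using yx le_trans[of "meet y \<delta>" y x] yN assms by simp
  then have "meet y \<delta> \<lessapprox> meet x \<delta>" using meet_greatest[of x \<delta> "meet y \<delta>"] \<open>meet y \<delta> \<lessapprox> \<delta>\<close> yN assms(1) by simp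
  then have "meet y \<delta> \<lessapprox> \<one>" using assms(2) by simp
  then have "meet y \<delta> = \<one>" using le_one_M meet_M yN by simp
  then have "y = \<one>" using N_red_one yN by simp
  then have "v = m" using vy assms by simp
  then show ?thesis using nv by simp
qed

lemma lemW': assumes "n \<in> N" "t \<in> M" "t \<lessapprox> \<omega>" "\<omega> \<lessapprox> n \<otimes> t" shows "t = \<omega>"
proof -
  define r where "r = inv t \<otimes> \<omega>"
  have rM: "r \<in> M" using r_def assms by (simp add: le_def')
  define q where "q = inv \<omega> \<otimes> (n \<otimes> t)"
  have qM: "q \<in> M" using q_def assms by (simp add: le_def')
  define nh where "nh = \<delta> \<otimes> n \<otimes> inv \<delta>"
  have nhN: "nh \<in> N" using psi2 assms nh_def by simp
  define x where "x = \<Delta> \<otimes> r \<otimes> inv \<Delta>"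
  have xM: "x \<in> M" using phi2 rM x_def by simp
  define qh where "qh = \<Delta> \<otimes> q \<otimes> inv \<Delta>"
  have qhM: "qh \<in> M" using phi2 qM qh_def by simp
  have e1: "nh = qh \<otimes> x" unfolding nh_def qh_def x_def q_def r_def using assms
    by (simp add: m_assoc inv_mult_group)
  have "qh \<lessapprox> nh" using e1 le_multM qhM xM by simp
  then have "inv qh \<otimes> nh \<in> N" using PC[OF nhN qhM] by simp
  then have xN: "x \<in> N" using e1 qhM xM by simp
  define th where "th = \<Delta> \<otimes> t \<otimes> inv \<Delta>"
  have thM: "th \<in> M" using phi2 assms th_def by simp
  have e2: "\<Delta> \<otimes> inv (x \<otimes> \<delta>) = th" unfolding th_def x_def r_def using assms
    by (simp add: m_assoc inv_mult_group)
  have "x \<otimes> \<delta> \<in> Div G M \<Delta>" using balanced_RI[OF balD] e2 thM xM by simp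
  then have "x \<otimes> \<delta> \<in> Div G M \<delta>" using Divd xN by simp
  then have "\<delta> \<otimes> inv (x \<otimes> \<delta>) \<in> M" using balanced_R[OF bald] by simp
  moreover have "\<delta> \<otimes> inv (x \<otimes> \<delta>) = inv x" using xM by (simp add: inv_mult_group m_assoc)
  ultimately have "inv x \<in> M" by simp
  then have "x = \<one>" using M_inv_one xM by blast
  moreover have "inv \<Delta> \<otimes> x \<otimes> \<Delta> = r" unfolding x_def using rM by (simp add: m_assoc)
  ultimately have r1: "r = \<one>" by simp
  have "t \<otimes> r = \<omega>" unfolding r_def using assms by simp
  then show ?thesis using r1 assms by simp
qed

lemma lemW: assumes "n \<in> N" "a \<in> M" "\<omega> \<lessapprox> n \<otimes> a" shows "\<omega> \<lessapprox> a"
proof -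
  have e: "n \<otimes> \<omega> = \<omega> \<otimes> (inv \<Delta> \<otimes> (\<delta> \<otimes> n \<otimes> inv \<delta>) \<otimes> \<Delta>)" using assms
    by (simp add: m_assoc inv_mult_group)
  have "inv \<Delta> \<otimes> (\<delta> \<otimes> n \<otimes> inv \<delta>) \<otimes> \<Delta> \<in> M" using phi1 psi2 assms by simp
  then have "\<omega> \<lessapprox> n \<otimes> \<omega>" using e le_multM by simp
  define t where "t = meet a \<omega>"
  have tM: "t \<in> M" using t_def meet_M assms by simp
  have "inv n \<otimes> \<omega> \<lessapprox> a" using le_mult_left[of n "inv n \<otimes> \<omega>" a] assms by simp
  moreover have "inv n \<otimes> \<omega> \<lessapprox> \<omega>" using le_mult_left[of n "inv n \<otimes> \<omega>" \<omega>] assms \<open>\<omega> \<lessapprox> n \<otimes> \<omega>\<close> by simp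
  ultimately have "inv n \<otimes> \<omega> \<lessapprox> t" using t_def meet_greatest assms by simp
  then have "\<omega> \<lessapprox> n \<otimes> t" using le_mult_left[of n "inv n \<otimes> \<omega>" t] assms tM by simp
  moreover have "t \<lessapprox> \<omega>" using t_def meet_le2 assms by simp
  ultimately have "t = \<omega>" using lemW' assms tM by simp
  then show ?thesis using t_def meet_le1 assms by (metis M_carrI om_carr)
qed

lemma DEC: assumes "b \<in> M" shows "\<exists>n\<in>N. \<exists>a\<in>M. b = n \<otimes> a \<and> meet a \<delta> = \<one>"
  using assms
proof (induct "len b" arbitrary: b rule: less_induct)
  case less
  show ?case
  proof (cases "meet b \<delta> = \<one>")
    case True
    moreover have "b = \<one> \<otimes> b" using less.prems by simp
    ultimately show ?thesis using less.prems one_N by blast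
  next
    case False
    define c where "c = meet b \<delta>"
    have cM: "c \<in> M" using c_def meet_M less.prems by simp
    have "c \<lessapprox> \<delta>" "c \<lessapprox> b" using c_def meet_le1 meet_le2 less.prems by auto
    then have "c \<in> Div G M \<delta>" using cM by (simp add: Div_iff)
    then have cN: "c \<in> N" by (rule Divd_N)
    define b' where "b' = inv c \<otimes> b"
    have b'M: "b' \<in> M" using b'_def \<open>c \<lessapprox> b\<close> by (simp add: le_def')
    have bb: "b = c \<otimes> b'" using b'_def cM less.prems by simp
    have c1: "c \<noteq> \<one>" using False c_def by simp
    have "len (c \<otimes> b') > len b'" using len_less2[of c b'] cM b'M c1 by simp
    then have "len b' < len b" using bb by simp
    then obtain n a where na: "n \<in> N" "a \<in> M" "b' = n \<otimes> a" "meet a \<delta> = \<one>" using less(1)[OF _ b'M] by blast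
    have "b = (c \<otimes> n) \<otimes> a" using bb na cM by (simp add: m_assoc)
    moreover have "c \<otimes> n \<in> N" using na cN by simp
    ultimately show ?thesis using na by blast
  qed
qed

lemma N_H: "n \<in> N \<Longrightarrow> n \<in> H"
proof -
  assume "n \<in> N"
  then obtain xs where xs: "set xs \<subseteq> Div G M \<delta>" "n = lprod G xs" using Ndef by (auto simp: monoid_gen_def)
  have "lprod G xs \<in> H" using xs(1)
  proof (induct xs)
    case Nil then show ?case using Hdef generate.one by simp
  next
    case (Cons s xs)
    then have "s \<in> generate G (Div G M \<delta>)" "lprod G xs \<in> generate G (Div G M \<delta>)"
      using Hdef generate.incl[of s "Div G M \<delta>" G] by auto
    then show ?case using Hdef generate.eng[of s G "Div G M \<delta>" "lprod G xs"] by simp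
  qed
  then show ?thesis using xs by simp
qed

lemma d_ne: assumes "H \<noteq> {\<one>}" shows "\<delta> \<noteq> \<one>"
proof
  assume d1: "\<delta> = \<one>"
  have "Div G M \<delta> \<subseteq> {\<one>}" using d1 le_one_M by (auto simp: Div_iff)
  have "h \<in> H \<Longrightarrow> h = \<one>" for h
  proof -
    assume "h \<in> H"
    then have "h \<in> generate G (Div G M \<delta>)" using Hdef by simp
    then show "h = \<one>" using \<open>Div G M \<delta> \<subseteq> {\<one>}\<close>
      by (induct rule: generate.induct) auto
  qed
  moreover have "\<one> \<in> H" using Hdef generate.one by simp
  ultimately show False using assms by blast
qed

lemma lemE: assumes "a \<in> M" "meet a \<delta> = \<one>" "\<not> \<omega> \<lessapprox> a" "h \<in> H" shows "h \<otimes> a \<otimes> inv \<Delta> \<notin> M"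
proof
  assume mM: "h \<otimes> a \<otimes> inv \<Delta> \<in> M"
  obtain k :: nat and n where hn: "n \<in> N" "h = inv (\<delta> [^] k) \<otimes> n" using H_form assms(4) by blast
  define m where "m = h \<otimes> a \<otimes> inv \<Delta>"
  have m: "m \<in> M" using mM m_def by simp
  have phm: "inv \<Delta> \<otimes> m \<otimes> \<Delta> \<in> M" using phi1 m by simp
  have e: "n \<otimes> a = \<delta> [^] Suc k \<otimes> (\<omega> \<otimes> (inv \<Delta> \<otimes> m \<otimes> \<Delta>))"
    unfolding m_def hn(2) using hn assms by (simp add: m_assoc d_comm)
  have "\<delta> [^] Suc k \<lessapprox> n \<otimes> a" using e le_multM[of "\<delta> [^] Suc k" "\<omega> \<otimes> (inv \<Delta> \<otimes> m \<otimes> \<Delta>)"] phm by simp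
  then have dn: "\<delta> [^] Suc k \<lessapprox> n" by (rule lemK[OF assms(1,2) hn(1) dpow_N])
  define n1 where "n1 = inv (\<delta> [^] Suc k) \<otimes> n"
  have n1N: "n1 \<in> N" using PC[OF hn(1) _ dn] n1_def by simp
  have "n1 \<otimes> a = \<omega> \<otimes> (inv \<Delta> \<otimes> m \<otimes> \<Delta>)" unfolding n1_def using e hn assms phm m
    by (simp add: m_assoc inv_mult_group)
  then have "\<omega> \<lessapprox> n1 \<otimes> a" using le_multM[of \<omega> "inv \<Delta> \<otimes> m \<otimes> \<Delta>"] phm by simp
  then show False using lemW[OF n1N assms(1)] assms(3) by simp
qed

definition red where "red a p \<longleftrightarrow> a \<in> M \<and> \<not> \<Delta> \<lessapprox> a \<and> meet a \<delta> = \<one> \<and> (p = 0 \<or> (p < (0::int) \<and> \<not> \<omega> \<lessapprox> a))"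

lemma HN_red_iff: "HN_reduced G M \<Delta> \<delta> b \<longleftrightarrow> (\<exists>a p. b = a \<otimes> \<Delta> [^] p \<and> red a p)"
  unfolding HN_reduced_def red_def unmovable_def N_reduced_def meet_def by blast

lemma lemU: assumes r1: "red a1 p1" and r2: "red a2 p2" and h: "h \<in> H"
  and e: "a2 \<otimes> \<Delta> [^] p2 = h \<otimes> (a1 \<otimes> \<Delta> [^] p1)" and le: "p1 \<le> p2"
  shows "a1 \<otimes> \<Delta> [^] p1 = a2 \<otimes> \<Delta> [^] p2"
proof (cases "p1 < p2")
  case True
  have a1: "a1 \<in> M" "meet a1 \<delta> = \<one>" using r1 by (auto simp: red_def)
  have a2: "a2 \<in> M" using r2 by (auto simp: red_def)
  have p1n: "p1 < 0" "\<not> \<omega> \<lessapprox> a1" using True r1 r2 by (auto simp: red_def)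
  have E: "h \<otimes> a1 \<otimes> inv \<Delta> \<notin> M" using lemE[OF a1 p1n(2) h] .
  have i1: "\<Delta> [^] p1 \<otimes> \<Delta> [^] (- p1 - 1) = inv \<Delta>"
    using int_pow_mult[of \<Delta> p1 "- p1 - 1"] int_pow_neg[of \<Delta> 1] by simp
  have "0 \<le> p2 + (- p1 - 1)" using True by simp
  then have i2: "\<Delta> [^] p2 \<otimes> \<Delta> [^] (- p1 - 1) = \<Delta> [^] nat (p2 + (- p1 - 1))"
    using int_pow_mult[of \<Delta> p2 "- p1 - 1"] pow_nat[where i="p2 + (- p1 - 1)" and x=\<Delta> and G=G] by simp
  have "h \<otimes> a1 \<otimes> inv \<Delta> = (h \<otimes> (a1 \<otimes> \<Delta> [^] p1)) \<otimes> \<Delta> [^] (- p1 - 1)"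
    using i1 h a1 by (simp add: m_assoc)
  also have "\<dots> = a2 \<otimes> \<Delta> [^] nat (p2 + (- p1 - 1))" using e[symmetric] i2 a2 by (simp add: m_assoc)
  finally have "h \<otimes> a1 \<otimes> inv \<Delta> \<in> M" using a2 by simp
  then show ?thesis using E by simp
next
  case False
  then have pp: "p1 = p2" using le by simp
  have a1: "a1 \<in> M" "meet a1 \<delta> = \<one>" using r1 by (auto simp: red_def)
  have a2: "a2 \<in> M" "meet a2 \<delta> = \<one>" using r2 by (auto simp: red_def)
  have "a2 = (a2 \<otimes> \<Delta> [^] p2) \<otimes> inv (\<Delta> [^] p2)" using a2 by (simp add: m_assoc)
  also have "\<dots> = h \<otimes> a1" using e pp h a1 by (simp add: m_assoc)
  finally have a2h: "a2 = h \<otimes> a1" .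
  obtain k :: nat and n where hn: "n \<in> N" "h = inv (\<delta> [^] k) \<otimes> n" using H_form h by blast
  have "\<delta> [^] k \<otimes> a2 = n \<otimes> a1" using a2h hn a1 by (simp add: m_assoc)
  then have "\<delta> [^] k \<lessapprox> n \<otimes> a1" using le_multM[of "\<delta> [^] k" a2] a2 by simp
  then have dn: "\<delta> [^] k \<lessapprox> n" by (rule lemK[OF a1 hn(1) dpow_N])
  define n1 where "n1 = inv (\<delta> [^] k) \<otimes> n"
  have n1N: "n1 \<in> N" using PC[OF hn(1) _ dn] n1_def by simp
  have a2n: "a2 = n1 \<otimes> a1" using a2h hn n1_def by simp
  have "n1 \<lessapprox> \<one> \<otimes> a2" using a2n le_multM[of n1 a1] n1N a1 a2 by simp
  then have "n1 \<lessapprox> \<one>" by (rule lemK[OF a2 one_N n1N])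
  then have "n1 = \<one>" using le_one_M n1N by simp
  then show ?thesis using a2n a1 pp by simp
qed

lemma lemX: assumes "H \<noteq> {\<one>}" "\<alpha> \<in> carrier G" shows "\<exists>h\<in>H. \<exists>a p. red a p \<and> h \<otimes> \<alpha> = a \<otimes> \<Delta> [^] p"
proof (cases "\<exists>h\<in>H. h \<otimes> \<alpha> \<in> M")
  case True
  then obtain h where h: "h \<in> H" "h \<otimes> \<alpha> \<in> M" by blast
  obtain n a where na: "n \<in> N" "a \<in> M" "h \<otimes> \<alpha> = n \<otimes> a" "meet a \<delta> = \<one>" using DEC[OF h(2)] by blast
  have "\<not> \<Delta> \<lessapprox> a"
  proof
    assume "\<Delta> \<lessapprox> a"
    then have "\<delta> \<lessapprox> a" using d_le_D le_trans[of \<delta> \<Delta> a] na by simp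
    then have "\<delta> \<lessapprox> meet a \<delta>" using meet_greatest[of a \<delta> \<delta>] na by simp
    then have "\<delta> \<lessapprox> \<one>" using na by simp
    then show False using le_one_M d_ne[OF assms(1)] by simp
  qed
  then have r: "red a 0" using na by (simp add: red_def)
  have "inv n \<otimes> h \<in> H" using N_H[OF na(1)] h H_subgroup by (simp add: subgroup.m_closed subgroup.m_inv_closed)
  moreover have "(inv n \<otimes> h) \<otimes> \<alpha> = a \<otimes> \<Delta> [^] (0::int)" using na h assms by (simp add: m_assoc)
  ultimately show ?thesis using r by blast
next
  case False
  obtain k :: nat and m where km: "m \<in> M" "\<alpha> = inv (\<Delta> [^] k) \<otimes> m" using carrier_form assms by blast
  define Q where "Q = {j::nat. \<exists>h\<in>H. h \<otimes> \<alpha> \<otimes> \<Delta> [^] j \<in> M}"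
  have "\<one> \<otimes> \<alpha> \<otimes> \<Delta> [^] k = inv (\<Delta> [^] k) \<otimes> m \<otimes> \<Delta> [^] k" using km by simp
  then have "k \<in> Q" using phi1_pow[OF km(1)] Q_def H_subgroup subgroup.one_closed by fastforce
  define J where "J = (LEAST j. j \<in> Q)"
  have JQ: "J \<in> Q" using LeastI[of "\<lambda>j. j \<in> Q", OF \<open>k \<in> Q\<close>] J_def by simp
  have Jmin: "j < J \<Longrightarrow> j \<notin> Q" for j using not_less_Least[of j "\<lambda>j. j \<in> Q"] J_def by simp
  obtain h where h: "h \<in> H" "h \<otimes> \<alpha> \<otimes> \<Delta> [^] J \<in> M" using JQ Q_def by blast
  have J0: "J \<noteq> 0"
  proof
    assume "J = 0"
    then have "h \<otimes> \<alpha> \<in> M" using h assms by simp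
    then show False using False h(1) by blast
  qed
  then obtain J' where J': "J = Suc J'" by (cases J) auto
  obtain n a where na: "n \<in> N" "a \<in> M" "h \<otimes> \<alpha> \<otimes> \<Delta> [^] J = n \<otimes> a" "meet a \<delta> = \<one>" using DEC[OF h(2)] by blast
  define g where "g = inv n \<otimes> h"
  have gH: "g \<in> H" using N_H[OF na(1)] h g_def H_subgroup by (simp add: subgroup.m_closed subgroup.m_inv_closed)
  have ga: "g \<otimes> \<alpha> \<otimes> \<Delta> [^] J = a" using g_def na h assms by (simp add: m_assoc)
  have ga': "g \<otimes> \<alpha> \<otimes> \<Delta> [^] J' = a \<otimes> inv \<Delta>"
  proof -
    have "a \<otimes> inv \<Delta> = ((g \<otimes> \<alpha> \<otimes> \<Delta> [^] J') \<otimes> \<Delta>) \<otimes> inv \<Delta>" using ga J' gH assms by (simp add: m_assoc)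
    also have "\<dots> = g \<otimes> \<alpha> \<otimes> \<Delta> [^] J'" using gH assms by (simp add: m_assoc)
    finally show ?thesis by simp
  qed
  have "\<not> \<Delta> \<lessapprox> a"
  proof
    assume "\<Delta> \<lessapprox> a"
    then obtain c where c: "c \<in> M" "a = \<Delta> \<otimes> c" using le_E[of \<Delta> a] na by auto
    have "g \<otimes> \<alpha> \<otimes> \<Delta> [^] J' \<in> M" using ga' c phi2[OF c(1)] by (simp add: m_assoc)
    then have "J' \<in> Q" using gH Q_def by blast
    then show False using Jmin J' by simp
  qed
  moreover have "\<not> \<omega> \<lessapprox> a"
  proof
    assume "\<omega> \<lessapprox> a"
    then obtain c where c: "c \<in> M" "a = \<omega> \<otimes> c" using le_E[of \<omega> a] na by auto
    have "(\<delta> \<otimes> g) \<otimes> \<alpha> \<otimes> \<Delta> [^] J' = \<Delta> \<otimes> c \<otimes> inv \<Delta>" using ga' c gH assms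
      by (simp add: m_assoc)
    then have "(\<delta> \<otimes> g) \<otimes> \<alpha> \<otimes> \<Delta> [^] J' \<in> M" using phi2[OF c(1)] by simp
    moreover have "\<delta> \<otimes> g \<in> H" using N_H[OF d_N] gH H_subgroup by (simp add: subgroup.m_closed)
    ultimately have "J' \<in> Q" using Q_def by blast
    then show False using Jmin J' by simp
  qed
  ultimately have r: "red a (- int J)" using na J0 by (simp add: red_def)
  have "g \<otimes> \<alpha> = a \<otimes> \<Delta> [^] (- int J)" using ga[symmetric] gH assms int_pow_neg_int[of \<Delta> J]
    by (simp add: m_assoc)
  then show ?thesis using r gH by blast
qed

lemma uniq: assumes "\<alpha> \<in> carrier G"
  and t1: "t1 \<in> (H #> \<alpha>) \<inter> {\<beta> \<in> carrier G. HN_reduced G M \<Delta> \<delta> \<beta>}"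
  and t2: "t2 \<in> (H #> \<alpha>) \<inter> {\<beta> \<in> carrier G. HN_reduced G M \<Delta> \<delta> \<beta>}"
  shows "t1 = t2"
proof -
  obtain h1 where h1: "h1 \<in> H" "t1 = h1 \<otimes> \<alpha>" using t1 by (auto simp: r_coset_def)
  obtain h2 where h2: "h2 \<in> H" "t2 = h2 \<otimes> \<alpha>" using t2 by (auto simp: r_coset_def)
  obtain a1 p1 where r1: "t1 = a1 \<otimes> \<Delta> [^] p1" "red a1 p1" using t1 HN_red_iff by auto
  obtain a2 p2 where r2: "t2 = a2 \<otimes> \<Delta> [^] p2" "red a2 p2" using t2 HN_red_iff by auto
  have hH: "h2 \<otimes> inv h1 \<in> H" "h1 \<otimes> inv h2 \<in> H" using h1 h2 H_subgroup
    by (simp_all add: subgroup.m_closed subgroup.m_inv_closed)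
  have e1: "t2 = (h2 \<otimes> inv h1) \<otimes> t1" using h1 h2 assms by (simp add: m_assoc)
  have e2: "t1 = (h1 \<otimes> inv h2) \<otimes> t2" using h1 h2 assms by (simp add: m_assoc)
  show ?thesis
  proof (cases "p1 \<le> p2")
    case True
    show ?thesis using lemU[OF r1(2) r2(2) hH(1) _ True] e1 r1(1) r2(1) by simp
  next
    case False
    then have "p2 \<le> p1" by simp
    show ?thesis using lemU[OF r2(2) r1(2) hH(2) _ \<open>p2 \<le> p1\<close>] e2 r1(1) r2(1) by simp
  qed
qed

lemma main: assumes "H \<noteq> {\<one>}" "\<alpha> \<in> carrier G"
  shows "\<exists>!t. t \<in> (H #> \<alpha>) \<inter> {\<beta> \<in> carrier G. HN_reduced G M \<Delta> \<delta> \<beta>}"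
proof -
  obtain h a p where hap: "h \<in> H" "red a p" "h \<otimes> \<alpha> = a \<otimes> \<Delta> [^] p" using lemX[OF assms] by blast
  have m: "h \<otimes> \<alpha> \<in> H #> \<alpha>" using hap(1) unfolding r_coset_def by blast
  have c: "h \<otimes> \<alpha> \<in> carrier G" using hap(1) assms(2) by simp
  have "HN_reduced G M \<Delta> \<delta> (h \<otimes> \<alpha>)" using HN_red_iff hap(2,3) by blast
  then have "h \<otimes> \<alpha> \<in> (H #> \<alpha>) \<inter> {\<beta> \<in> carrier G. HN_reduced G M \<Delta> \<delta> \<beta>}"
    using m c by simp
  then show ?thesis using uniq[OF assms(2)] by blast
qed
end

theorem theorem3p3:
  fixes G :: "('a, 'b) monoid_scheme"
  assumes "garside_structure G M \<Delta>"
    and "parabolic_substructure G M \<Delta> H N \<delta>"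
    and "H \<noteq> {\<one>\<^bsub>G\<^esub>}"
    and "T = {\<alpha> \<in> carrier G. HN_reduced G M \<Delta> \<delta> \<alpha>}"
  shows "\<forall>\<alpha>\<in>carrier G. \<exists>!t. t \<in> (H #>\<^bsub>G\<^esub> \<alpha>) \<inter> T"
proof -
  interpret gctx G M \<Delta> H N \<delta>
    using assms(1,2) unfolding garside_structure_def parabolic_substructure_def gctx_def gctx_axioms_def
    by blast
  show ?thesis using main[OF assms(3)] assms(4) by blast
qed

end
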